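(* Let $\alpha\in\mathbb{C}$, $\beta\in\mathbb{C}\setminus\mathbb{Z}$, and $D\in\mathrm{Der}(\mathcal{W},\mathcal{F}_\alpha\otimes\mathcal{F}_\beta)_0$. Write $D(L_1)=\sum_{i\in\mathbb{Z}}a_{1,i}v_i\otimes v_{1-i}$ and $l=\max\{|i|: a_{1,i}\neq0\}$ (assuming $D(L_1)\ne 0$). Then there exist $c_{-l},\dots,c_l\in\mathbb{C}$ such that $$D(L_1)=L_1\cdot\Big(\sum_{i=-l}^{l}c_i\,v_i\otimes v_{-i}\Big)+c_l(\alpha+l)\,v_{l+1}\otimes v_{-l}.$$
   Context: The Witt algebra $\mathcal{W}$ has basis $\{L_n\mid n\in\mathbb{Z}\}$ and bracket $[L_m,L_n]=(m-n)L_{m+n}$. $\mathcal{F}_\alpha$ has basis $\{v_n\}$ with $L_m\cdot v_n=-(\alpha m+n)v_{m+n}$; $\mathcal{F}_\alpha\otimes\mathcal{F}_\beta$ is a $\mathcal{W}$-module via $L_m\cdot(v_i\otimes v_j)=-(i+\alpha m)v_{m+i}\otimes v_j-(j+\beta m)v_i\otimes v_{m+j}$, graded by $(\mathcal{F}_\alpha\otimes\mathcal{F}_\beta)_k=\bigoplus_i\mathbb{C}\,v_i\otimes v_{k-i}$. $\mathrm{Der}(\mathcal{W},\mathcal{F}_\alpha\otimes\mathcal{F}_\beta)_0$ is the space of linear maps $D$ with $D([x,y])=x\cdot D(y)-y\cdot D(x)$ and $D(L_m)\in(\mathcal{F}_\alpha\otimes\mathcal{F}_\beta)_m$ for all $m$.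 *)

theory Defs
  imports Complex_Main
begin

text \<open>Elements of the Witt algebra W are finitely supported functions x :: int => complex,
  x = sum_n (x n) L_n.  Elements of F_alpha (x) F_beta are finitely supported
  functions w :: int * int => complex, w = sum_{i,j} w(i,j) v_i (x) v_j.\<close>

definition fin_supp :: "('a \<Rightarrow> complex) \<Rightarrow> bool" where
  "fin_supp f \<longleftrightarrow> finite {x. f x \<noteq> 0}"

definition Lb :: "int \<Rightarrow> int \<Rightarrow> complex" where
  "Lb m = (\<lambda>n. if n = m then 1 else 0)"

definition tens_vec :: "int \<Rightarrow> int \<Rightarrow> int \<times> int \<Rightarrow> complex" where
  "tens_vec a b = (\<lambda>(i, j). if i = a \<and> j = b then 1 else 0)"

text \<open>Witt bracket: [L_m, L_n] = (m - n) L_{m+n}, extended bilinearly.\<close>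
definition witt_bracket :: "(int \<Rightarrow> complex) \<Rightarrow> (int \<Rightarrow> complex) \<Rightarrow> int \<Rightarrow> complex" where
  "witt_bracket x y = (\<lambda>k. \<Sum>m\<in>{m. x m \<noteq> 0}. of_int (m - (k - m)) * x m * y (k - m))"

text \<open>Action of L_m on F_alpha (x) F_beta:
  L_m (v_a (x) v_b) = -(a + alpha m) v_{m+a} (x) v_b - (b + beta m) v_a (x) v_{m+b}.\<close>
definition Lact :: "complex \<Rightarrow> complex \<Rightarrow> int \<Rightarrow> (int \<times> int \<Rightarrow> complex) \<Rightarrow> int \<times> int \<Rightarrow> complex" where
  "Lact \<alpha> \<beta> m w = (\<lambda>(i, j). - (of_int (i - m) + \<alpha> * of_int m) * w (i - m, j)
                               - (of_int (j - m) + \<beta> * of_int m) * w (i, j - m))"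

definition wact :: "complex \<Rightarrow> complex \<Rightarrow> (int \<Rightarrow> complex) \<Rightarrow> (int \<times> int \<Rightarrow> complex) \<Rightarrow> int \<times> int \<Rightarrow> complex" where
  "wact \<alpha> \<beta> x w = (\<lambda>p. \<Sum>m\<in>{m. x m \<noteq> 0}. x m * Lact \<alpha> \<beta> m w p)"

text \<open>D is in Der(W, F_alpha (x) F_beta)_0: a linear map W -> F_alpha (x) F_beta
  (only its values on finitely supported arguments matter), satisfying the derivation
  rule, and with D(L_m) in degree m.\<close>
definition is_der0 :: "complex \<Rightarrow> complex \<Rightarrow> ((int \<Rightarrow> complex) \<Rightarrow> (int \<times> int \<Rightarrow> complex)) \<Rightarrow> bool" where
  "is_der0 \<alpha> \<beta> D \<longleftrightarrow>
     (\<forall>x. fin_supp x \<longrightarrow> fin_supp (D x)) \<and>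
     (\<forall>x y a b. fin_supp x \<longrightarrow> fin_supp y \<longrightarrow>
         D (\<lambda>n. a * x n + b * y n) = (\<lambda>p. a * D x p + b * D y p)) \<and>
     (\<forall>x y. fin_supp x \<longrightarrow> fin_supp y \<longrightarrow>
         D (witt_bracket x y) = (\<lambda>p. wact \<alpha> \<beta> x (D y) p - wact \<alpha> \<beta> y (D x) p)) \<and>
     (\<forall>m i j. D (Lb m) (i, j) \<noteq> 0 \<longrightarrow> i + j = m)"

end

theory Submission
  imports Defs
begin

fun cs :: "(int\<Rightarrow>complex) \<Rightarrow> complex \<Rightarrow> complex \<Rightarrow> int \<Rightarrow> nat \<Rightarrow> complex" where
  "cs a \<alpha> \<beta> s 0 = - a s / (\<beta> - of_int s)"
| "cs a \<alpha> \<beta> s (Suc n) = (- a (s + int n + 1) - (of_int (s + int n) + \<alpha>) * cs a \<alpha> \<beta> s n)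
        / (\<beta> - of_int (s + int n + 1))"

definition cc :: "(int\<Rightarrow>complex) \<Rightarrow> complex \<Rightarrow> complex \<Rightarrow> int \<Rightarrow> int \<Rightarrow> complex" where
  "cc a \<alpha> \<beta> s k = (if k < s then 0 else cs a \<alpha> \<beta> s (nat (k - s)))"

lemma nz: "\<beta> \<notin> \<int> \<Longrightarrow> \<beta> - of_int k \<noteq> (0::complex)"
  by (metis Ints_of_int eq_iff_diff_eq_0)

lemma cc_rec:
  assumes "\<beta> \<notin> \<int>" "s \<le> k"
  shows "a k = -(of_int (k-1) + \<alpha>) * cc a \<alpha> \<beta> s (k-1) - (\<beta> - of_int k) * cc a \<alpha> \<beta> s k"
proof (cases "k = s")
  case True
  then show ?thesis using nz[OF assms(1), of s] by (simp add: cc_def)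
next
  case False
  define n where "n = nat (k - 1 - s)"
  have k: "k = s + int n + 1" and nk: "nat (k - s) = Suc n" using False assms(2) by (auto simp: n_def)
  have "cc a \<alpha> \<beta> s k = (- a k - (of_int (k-1) + \<alpha>) * cc a \<alpha> \<beta> s (k-1)) / (\<beta> - of_int k)"
  proof -
    have "\<not> k < s" using assms(2) by simp
    hence "cc a \<alpha> \<beta> s k = cs a \<alpha> \<beta> s (Suc n)" unfolding cc_def using nk by simp
    moreover have "\<not> k - 1 < s" using False assms(2) by simp
    hence "cc a \<alpha> \<beta> s (k-1) = cs a \<alpha> \<beta> s n" unfolding cc_def n_def by simp
    ultimately show ?thesis by (simp add: k)
  qed
  then show ?thesis using nz[OF assms(1), of k] by (simp add: field_simps)
qed

theorem lemmaL1p4: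
  fixes \<alpha> \<beta> :: complex
    and D :: "(int \<Rightarrow> complex) \<Rightarrow> (int \<times> int \<Rightarrow> complex)"
    and l :: int
  assumes "\<beta> \<notin> \<int>"
    and "is_der0 \<alpha> \<beta> D"
    and "D (Lb 1) \<noteq> (\<lambda>_. 0)"
    and "l = Max {\<bar>i\<bar> | i. D (Lb 1) (i, 1 - i) \<noteq> 0}"
  shows "\<exists>c :: int \<Rightarrow> complex.
           D (Lb 1) = (\<lambda>p. Lact \<alpha> \<beta> 1 (\<lambda>(i, j). if - l \<le> i \<and> i \<le> l \<and> j = - i then c i else 0) p
                          + c l * (\<alpha> + of_int l) * tens_vec (l + 1) (- l) p)"
proof -
  define a where "a i = D (Lb 1) (i, 1 - i)" for i
  have fsL: "fin_supp (Lb 1)" unfolding fin_supp_def Lb_def by simp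
  have fsD: "finite {p. D (Lb 1) p \<noteq> 0}" using assms(2) fsL unfolding is_der0_def fin_supp_def by blast
  have deg: "\<And>i j. D (Lb 1) (i, j) \<noteq> 0 \<Longrightarrow> i + j = 1" using assms(2) unfolding is_der0_def by blast
  have "{i. a i \<noteq> 0} \<subseteq> fst ` {p. D (Lb 1) p \<noteq> 0}"
    unfolding a_def by (auto intro: image_eqI[where x="(_, _)"])
  hence fa: "finite {i. a i \<noteq> 0}" using fsD finite_surj by blast
  have S: "{\<bar>i\<bar> | i. D (Lb 1) (i, 1 - i) \<noteq> 0} = abs ` {i. a i \<noteq> 0}" unfolding a_def by auto
  have fS: "finite {\<bar>i\<bar> | i. D (Lb 1) (i, 1 - i) \<noteq> 0}" using S fa by simp
  have bound: "\<And>i. a i \<noteq> 0 \<Longrightarrow> \<bar>i\<bar> \<le> l"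
    using assms(4) fS Max_ge unfolding a_def by blast
  obtain p where p: "D (Lb 1) p \<noteq> 0" using assms(3) by fastforce
  obtain i0 j0 where pij: "p = (i0, j0)" by (cases p)
  have "a i0 \<noteq> 0" using p deg[of i0 j0] unfolding pij a_def
    by (metis add_diff_cancel_left')
  hence l0: "0 \<le> l" using bound[of i0] by linarith
  define c where "c = cc a \<alpha> \<beta> (-l)"
  have cbelow: "c (-l-1) = 0" unfolding c_def cc_def by simp
  show ?thesis
  proof (rule exI[of _ c], rule ext, clarify)
    fix i j
    show "D (Lb 1) (i, j) = Lact \<alpha> \<beta> 1 (\<lambda>(i, j). if - l \<le> i \<and> i \<le> l \<and> j = - i then c i else 0) (i, j)
                          + c l * (\<alpha> + of_int l) * tens_vec (l + 1) (- l) (i, j)"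
    proof (cases "i + j = 1")
      case False
      then show ?thesis using deg[of i j] by (auto simp: Lact_def tens_vec_def)
    next
      case True
      hence j: "j = 1 - i" by simp
      have L: "Lact \<alpha> \<beta> 1 (\<lambda>(i, j). if - l \<le> i \<and> i \<le> l \<and> j = - i then c i else 0) (i, j)
         = -(of_int (i-1) + \<alpha>) * (if -l \<le> i - 1 \<and> i - 1 \<le> l then c (i-1) else 0)
           - (\<beta> - of_int i) * (if -l \<le> i \<and> i \<le> l then c i else 0)"
        unfolding Lact_def j by (simp add: algebra_simps)
      have T: "tens_vec (l + 1) (- l) (i, j) = (if i = l + 1 then 1 else 0)"
        unfolding tens_vec_def j by auto
      have Dij: "D (Lb 1) (i, j) = a i" unfolding a_def j ..
      consider "-l \<le> i \<and> i \<le> l" | "i = l + 1" | "i < -l \<or> i > l + 1" by linarith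
      then show ?thesis
      proof cases
        case 1
        have r: "a i = -(of_int (i-1) + \<alpha>) * c (i-1) - (\<beta> - of_int i) * c i"
          unfolding c_def using cc_rec[OF assms(1), of "-l" i a \<alpha>] 1 by simp
        show ?thesis
        proof (cases "i = -l")
          case True
          have "\<not> (-l \<le> i - 1)" using True by simp
          then show ?thesis unfolding Dij L T using 1 l0 r True cbelow by simp
        next
          case False
          then show ?thesis using 1 l0 r by (simp add: Dij L T)
        qed
      next
        case 2
        have "a i = 0" using bound[of i] 2 l0 by force
        then show ?thesis unfolding Dij L T using 2 l0 by (simp add: algebra_simps)
      next
        case 3
        have "a i = 0" using bound[of i] 3 l0 by force
        then show ?thesis unfolding Dij L T using 3 l0 by auto
      qed
    qed
  qed
qed

end
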